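(* Let $p(z)$ be an admissible polynomial of degree at most $n-1$ and let $L(p(z))\subset S$ be the saturated segment ideal with respect to the lex order with Hilbert polynomial $p(z)$. Then $L(p(z))$ is a gen-segment ideal with respect to the revlex order if and only if $\deg p(z)\le1$ or $L(p(z))$ has at most two minimal generators of degree $>1$.
   Context: $S=K[x_0,\dots,x_n]$, $K$ algebraically closed of characteristic $0$, standard grading, $x_0<x_1<\dots<x_n$; $\mathbb T_t$ is the set of terms of degree $t$. Lex order: for terms of the same degree, $x^\alpha\prec x^\beta$ iff $\alpha_k<\beta_k$ where $k=\max\{i:\alpha_i\ne\beta_i\}$. Revlex order: $x^\alpha\prec x^\beta$ iff $\alpha_h>\beta_h$ where $h=\min\{i:\alpha_i\neq\beta_i\}$. Given a term order, $B\subseteq\mathbb T_t$ is a segment if $\tau\in B$, $\tau'\in\mathbb T_t$, $\tau'\succ\tau$ imply $\tau'\in B$; a monomial ideal is a segment ideal if all its degree components are segments. For every admissible polynomial $p(z)$ of degree $\le n-1$ there is a unique saturated lex segment ideal $L(p(z))$ with Hilbert polynomial $p(z)$. A nonzero saturated Borel ideal $I$ is a gen-segment ideal w.r.t. $\preceq$ if for every $s$, whenever $\tau$ is a minimal monomial generator of degree $s$ and $\tau'\in\mathbb T_s$ is not in the ideal generated by $I_{s-1}$ with $\tau'\succ\tau$, then $\tau'$ is also a minimal generator of $I$. *)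

theory Defs
  imports "HOL-Computational_Algebra.Polynomial"
begin

text \<open>Terms of S = K[x_0,...,x_n] are encoded by exponent vectors
  a :: nat \<Rightarrow> nat with a i = 0 for i > n. Monomial ideals are encoded by
  their sets of terms.\<close>

definition terms :: "nat \<Rightarrow> (nat \<Rightarrow> nat) set" where
  "terms n = {a. \<forall>i>n. a i = 0}"

definition tdeg :: "nat \<Rightarrow> (nat \<Rightarrow> nat) \<Rightarrow> nat" where
  "tdeg n a = (\<Sum>i\<le>n. a i)"

definition tdvd :: "(nat \<Rightarrow> nat) \<Rightarrow> (nat \<Rightarrow> nat) \<Rightarrow> bool" where
  "tdvd a b \<longleftrightarrow> (\<forall>i. a i \<le> b i)"

definition monomial_ideal :: "nat \<Rightarrow> (nat \<Rightarrow> nat) set \<Rightarrow> bool" where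
  "monomial_ideal n I \<longleftrightarrow> I \<subseteq> terms n \<and>
     (\<forall>a\<in>I. \<forall>b\<in>terms n. (\<lambda>i. a i + b i) \<in> I)"

definition min_gen :: "(nat \<Rightarrow> nat) set \<Rightarrow> (nat \<Rightarrow> nat) \<Rightarrow> bool" where
  "min_gen I a \<longleftrightarrow> a \<in> I \<and> (\<forall>b\<in>I. tdvd b a \<longrightarrow> b = a)"

text \<open>Hilbert function of S/I in degree t.\<close>
definition hilb :: "nat \<Rightarrow> (nat \<Rightarrow> nat) set \<Rightarrow> nat \<Rightarrow> nat" where
  "hilb n I t = card {a \<in> terms n. tdeg n a = t \<and> a \<notin> I}"

definition hilbert_poly :: "nat \<Rightarrow> (nat \<Rightarrow> nat) set \<Rightarrow> rat poly \<Rightarrow> bool" where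
  "hilbert_poly n I p \<longleftrightarrow> (\<exists>t0. \<forall>t\<ge>t0. of_nat (hilb n I t) = poly p (of_nat t))"

text \<open>Admissible polynomial: Hilbert polynomial of S/J for some homogeneous
  ideal J; by Groebner degeneration equivalently for some monomial ideal J.\<close>
definition admissible :: "nat \<Rightarrow> rat poly \<Rightarrow> bool" where
  "admissible n p \<longleftrightarrow> (\<exists>J. monomial_ideal n J \<and> hilbert_poly n J p)"

text \<open>Saturation: I : m^infinity = I (for monomial ideals).\<close>
definition saturated :: "nat \<Rightarrow> (nat \<Rightarrow> nat) set \<Rightarrow> bool" where
  "saturated n I \<longleftrightarrow> (\<forall>a\<in>terms n.
     (\<exists>k. \<forall>b\<in>terms n. tdeg n b = k \<longrightarrow> (\<lambda>i. a i + b i) \<in> I) \<longrightarrow> a \<in> I)"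

text \<open>Borel-fixed (strongly stable) with x_0 < x_1 < ... < x_n:
  if tau in I, x_j divides tau, j < i \<le> n, then x_i tau / x_j in I.\<close>
definition borel :: "nat \<Rightarrow> (nat \<Rightarrow> nat) set \<Rightarrow> bool" where
  "borel n I \<longleftrightarrow> (\<forall>a\<in>I. \<forall>i j. j < i \<and> i \<le> n \<and> a j > 0 \<longrightarrow>
     (\<lambda>k. if k = j then a k - 1 else if k = i then a k + 1 else a k) \<in> I)"

text \<open>Strict orders: less a b means a \<prec> b.\<close>
definition lex_less :: "(nat \<Rightarrow> nat) \<Rightarrow> (nat \<Rightarrow> nat) \<Rightarrow> bool" where
  "lex_less a b \<longleftrightarrow> (\<exists>k. a k < b k \<and> (\<forall>i>k. a i = b i))"

definition revlex_less :: "(nat \<Rightarrow> nat) \<Rightarrow> (nat \<Rightarrow> nat) \<Rightarrow> bool" where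
  "revlex_less a b \<longleftrightarrow> (\<exists>h. a h > b h \<and> (\<forall>i<h. a i = b i))"

definition segment_ideal ::
    "((nat \<Rightarrow> nat) \<Rightarrow> (nat \<Rightarrow> nat) \<Rightarrow> bool) \<Rightarrow> nat \<Rightarrow> (nat \<Rightarrow> nat) set \<Rightarrow> bool" where
  "segment_ideal lt n I \<longleftrightarrow> monomial_ideal n I \<and>
     (\<forall>a\<in>I. \<forall>b\<in>terms n. tdeg n b = tdeg n a \<and> lt a b \<longrightarrow> b \<in> I)"

text \<open>Terms of degree s in the ideal generated by I_{s-1}.\<close>
definition in_gen_prev :: "nat \<Rightarrow> (nat \<Rightarrow> nat) set \<Rightarrow> nat \<Rightarrow> (nat \<Rightarrow> nat) \<Rightarrow> bool" where
  "in_gen_prev n I s a \<longleftrightarrow> (\<exists>b\<in>I. tdeg n b + 1 = s \<and> tdvd b a)"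

definition gen_segment ::
    "((nat \<Rightarrow> nat) \<Rightarrow> (nat \<Rightarrow> nat) \<Rightarrow> bool) \<Rightarrow> nat \<Rightarrow> (nat \<Rightarrow> nat) set \<Rightarrow> bool" where
  "gen_segment lt n I \<longleftrightarrow> monomial_ideal n I \<and> I \<noteq> {} \<and> saturated n I \<and> borel n I \<and>
     (\<forall>s a b. min_gen I a \<and> tdeg n a = s \<and> b \<in> terms n \<and> tdeg n b = s \<and>
        \<not> in_gen_prev n I s b \<and> lt a b \<longrightarrow> min_gen I b)"

end

theory Submission
  imports Defs "HOL-Library.FuncSet"
begin

definition key :: "(nat \<Rightarrow> nat) \<Rightarrow> nat \<Rightarrow> nat" where
  "key a = (\<lambda>i. if i = 0 then 0 else a i)"

lemma lex_irrefl: "\<not> lex_less a a" by (auto simp: lex_less_def)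

lemma lex_asym: "lex_less a b \<Longrightarrow> \<not> lex_less b a"
proof
  assume "lex_less a b" "lex_less b a"
  then obtain k1 k2 where h1: "a k1 < b k1" "\<forall>i>k1. a i = b i"
    and h2: "b k2 < a k2" "\<forall>i>k2. b i = a i" unfolding lex_less_def by blast
  consider "k1 < k2" | "k2 < k1" | "k1 = k2" by linarith
  then show False
  proof cases
    case 1 then have "a k2 = b k2" using h1(2) by blast
    then show ?thesis using h2(1) by simp
  next
    case 2 then have "b k1 = a k1" using h2(2) by blast
    then show ?thesis using h1(1) by simp
  next
    case 3 then show ?thesis using h1(1) h2(1) by simp
  qed
qed

lemma lex_trans: "lex_less a b \<Longrightarrow> lex_less b c \<Longrightarrow> lex_less a c"
proof -
  assume "lex_less a b" "lex_less b c"
  then obtain k1 k2 where h1: "a k1 < b k1" "\<forall>i>k1. a i = b i"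
    and h2: "b k2 < c k2" "\<forall>i>k2. b i = c i" unfolding lex_less_def by blast
  consider "k1 < k2" | "k2 < k1" | "k1 = k2" by linarith
  then show ?thesis
  proof cases
    case 1
    have "a k2 = b k2" using h1(2) 1 by blast
    moreover have "\<forall>i>k2. a i = c i"
    proof (intro allI impI)
      fix i assume "k2 < i"
      then show "a i = c i" using h1(2) h2(2) 1 by (metis less_trans)
    qed
    ultimately show ?thesis unfolding lex_less_def using h2(1) by (intro exI[of _ k2]) simp
  next
    case 2
    have "b k1 = c k1" using h2(2) 2 by blast
    moreover have "\<forall>i>k1. a i = c i"
    proof (intro allI impI)
      fix i assume "k1 < i"
      then show "a i = c i" using h1(2) h2(2) 2 by (metis less_trans)
    qed
    ultimately show ?thesis unfolding lex_less_def using h1(1) by (intro exI[of _ k1]) simp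
  next
    case 3
    have "\<forall>i>k1. a i = c i" using h1(2) h2(2) 3 by simp
    then show ?thesis unfolding lex_less_def using h1(1) h2(1) 3 by (intro exI[of _ k1]) simp
  qed
qed

lemma lex_total:
  assumes "\<forall>i>n. a i = b i" "a \<noteq> b"
  shows "lex_less a b \<or> lex_less b a"
proof -
  let ?D = "{i. a i \<noteq> b i}"
  have sub: "?D \<subseteq> {..n}"
  proof
    fix i assume "i \<in> ?D"
    then have "\<not> n < i" using assms(1) by auto
    then show "i \<in> {..n}" by simp
  qed
  have fin: "finite ?D" using sub finite_subset by blast
  have ne: "?D \<noteq> {}" using assms(2) by auto
  define w where "w = Max ?D"
  have "w \<in> ?D" using Max_in[OF fin ne] w_def by simp
  then have w: "a w \<noteq> b w" by simp
  have up: "\<forall>i>w. a i = b i"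
  proof (intro allI impI)
    fix i assume "w < i"
    show "a i = b i"
    proof (rule ccontr)
      assume "a i \<noteq> b i"
      then have "i \<le> w" unfolding w_def using Max_ge[OF fin] by simp
      then show False using \<open>w < i\<close> by simp
    qed
  qed
  show ?thesis
  proof (cases "a w < b w")
    case True then show ?thesis using up unfolding lex_less_def by blast
  next
    case False then have "b w < a w" using w by simp
    moreover have "\<forall>i>w. b i = a i" using up by simp
    ultimately show ?thesis unfolding lex_less_def by blast
  qed
qed

lemma terms_zero: "a \<in> terms n \<Longrightarrow> n < i \<Longrightarrow> a i = 0"
  by (auto simp: terms_def)

lemma key_terms: "a \<in> terms n \<Longrightarrow> key a \<in> terms n"
  by (auto simp: terms_def key_def)

lemma tdeg_add: "tdeg n (\<lambda>i. a i + b i) = tdeg n a + tdeg n b"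
  by (simp add: tdeg_def sum.distrib)

lemma tdeg_key: "tdeg n a = a 0 + tdeg n (key a)"
proof -
  have "tdeg n a = (\<Sum>i\<le>n. (if i = 0 then a 0 else 0) + key a i)"
    unfolding tdeg_def key_def by (rule sum.cong) auto
  also have "\<dots> = a 0 + tdeg n (key a)"
    by (simp add: sum.distrib tdeg_def)
  finally show ?thesis .
qed

lemma tdeg_strict:
  assumes "a \<in> terms n" "b \<in> terms n" "\<forall>i. a i \<le> b i" "a \<noteq> b"
  shows "tdeg n a < tdeg n b"
proof -
  obtain i where i: "a i \<noteq> b i" using assms(4) by auto
  then have "a i < b i" using assms(3) le_neq_implies_less by blast
  then have "i \<le> n" using terms_zero[OF assms(2), of i] by (cases "n < i") auto
  show ?thesis unfolding tdeg_def
    by (rule sum_strict_mono_ex1) (use assms(3) \<open>a i < b i\<close> \<open>i \<le> n\<close> in auto)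
qed

lemma tdeg_ge: "i \<le> n \<Longrightarrow> a i \<le> tdeg n a"
  unfolding tdeg_def by (rule member_le_sum) auto

lemma tdeg_ge2: "i \<le> n \<Longrightarrow> l \<le> n \<Longrightarrow> i \<noteq> l \<Longrightarrow> a i + a l \<le> tdeg n a"
proof -
  assume "i \<le> n" "l \<le> n" "i \<noteq> l"
  have "(\<Sum>x\<in>{i,l}. a x) \<le> (\<Sum>x\<le>n. a x)"
    by (rule sum_mono2) (use \<open>i \<le> n\<close> \<open>l \<le> n\<close> in auto)
  then show ?thesis using \<open>i \<noteq> l\<close> by (simp add: tdeg_def)
qed

lemma lex_min_exists:
  "S \<subseteq> terms n \<Longrightarrow> S \<noteq> {} \<Longrightarrow> \<exists>c\<in>S. \<forall>b\<in>S. \<not> lex_less b c"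
proof (induction n arbitrary: S)
  case 0
  obtain a where "a \<in> S" using 0 by auto
  then obtain c where c: "c \<in> S" "\<forall>y. y \<in> S \<longrightarrow> c 0 \<le> y 0"
    using ex_has_least_nat[of "\<lambda>x. x \<in> S" a "\<lambda>x. x 0"] by blast
  show ?case
  proof (intro bexI[OF _ c(1)] ballI notI)
    fix b assume b: "b \<in> S" "lex_less b c"
    then obtain k where k: "b k < c k" "\<forall>i>k. b i = c i" unfolding lex_less_def by blast
    show False
    proof (cases "k = 0")
      case True then show ?thesis using k c b by fastforce
    next
      case False then have "b k = 0" "c k = 0" using b c 0 terms_zero by blast+
      then show ?thesis using k by simp
    qed
  qed
next
  case (Suc n)
  obtain a where "a \<in> S" using Suc by auto
  then obtain a0 where a0: "a0 \<in> S" "\<forall>y. y \<in> S \<longrightarrow> a0 (Suc n) \<le> y (Suc n)"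
    using ex_has_least_nat[of "\<lambda>x. x \<in> S" a "\<lambda>x. x (Suc n)"] by blast
  define \<mu> where "\<mu> = a0 (Suc n)"
  define S1 where "S1 = {x\<in>S. x (Suc n) = \<mu>}"
  define T where "T = (\<lambda>x. x(Suc n := 0)) ` S1"
  have "T \<subseteq> terms n"
  proof
    fix x assume "x \<in> T"
    then obtain y where y: "y \<in> S" "x = y(Suc n := 0)" unfolding T_def S1_def by auto
    then have "y \<in> terms (Suc n)" using Suc.prems(1) by auto
    then show "x \<in> terms n" using y(2) unfolding terms_def by auto
  qed
  moreover have "T \<noteq> {}" unfolding T_def S1_def \<mu>_def using a0 by auto
  ultimately obtain c' where c': "c' \<in> T" "\<forall>b\<in>T. \<not> lex_less b c'" using Suc.IH by blast
  then obtain c where c: "c \<in> S1" "c' = c(Suc n := 0)" unfolding T_def by auto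
  show ?case
  proof (intro bexI[of _ c] ballI notI)
    show "c \<in> S" using c S1_def by auto
    fix b assume b: "b \<in> S" "lex_less b c"
    then obtain k where k: "b k < c k" "\<forall>i>k. b i = c i" unfolding lex_less_def by blast
    have cmu: "c (Suc n) = \<mu>" using c S1_def by auto
    consider "k > Suc n" | "k = Suc n" | "k < Suc n" by linarith
    then show False
    proof cases
      case 1 then show ?thesis using k b Suc.prems(1) c \<open>c \<in> S\<close> terms_zero by (metis less_irrefl subsetD)
    next
      case 2 then show ?thesis using k a0 b cmu \<mu>_def by (metis leD)
    next
      case 3
      then have "b (Suc n) = \<mu>" using k cmu by auto
      then have "b(Suc n := 0) \<in> T" unfolding T_def S1_def using b by auto
      moreover have "lex_less (b(Suc n := 0)) c'" unfolding lex_less_def c(2)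
        using k 3 by (intro exI[of _ k]) auto
      ultimately show ?thesis using c' by blast
    qed
  qed
qed

definition LL :: "nat \<Rightarrow> (nat \<Rightarrow> nat) \<Rightarrow> (nat \<Rightarrow> nat) set" where
  "LL n c = {a \<in> terms n. \<not> lex_less (key a) c}"

lemma tdeg_e0: "tdeg n (\<lambda>i. if i = 0 then m else 0) = m"
  by (simp add: tdeg_def)

lemma e0_terms: "(\<lambda>i. if i = 0 then m else 0) \<in> terms n"
  by (simp add: terms_def)

lemma ideal_add: "monomial_ideal n L \<Longrightarrow> a \<in> L \<Longrightarrow> b \<in> terms n \<Longrightarrow> (\<lambda>i. a i + b i) \<in> L"
  unfolding monomial_ideal_def by blast

lemma key_key: "key (key a) = key a" unfolding key_def by (rule ext) simp

lemma key_decomp: "(\<lambda>i. key a i + (if i = 0 then a 0 else 0)) = a"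
  by (rule ext) (simp add: key_def)

lemma key_mem:
  assumes seg: "segment_ideal lex_less n L" and sat: "saturated n L" and a: "a \<in> terms n"
  shows "a \<in> L \<longleftrightarrow> key a \<in> L"
proof
  have mi: "monomial_ideal n L" using seg segment_ideal_def by blast
  assume "key a \<in> L"
  from ideal_add[OF mi this e0_terms[of "a 0" n]] show "a \<in> L" by (simp only: key_decomp)
next
  have mi: "monomial_ideal n L" using seg segment_ideal_def by blast
  have segp: "\<forall>a\<in>L. \<forall>b\<in>terms n. tdeg n b = tdeg n a \<and> lex_less a b \<longrightarrow> b \<in> L"
    using seg segment_ideal_def by blast
  assume aL: "a \<in> L"
  have ka: "key a \<in> terms n" using key_terms[OF a] .
  have "\<forall>b\<in>terms n. tdeg n b = a 0 \<longrightarrow> (\<lambda>i. key a i + b i) \<in> L"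
  proof (intro ballI impI)
    fix b assume b: "b \<in> terms n" "tdeg n b = a 0"
    define s where "s = (\<lambda>i. key a i + b i)"
    have sT: "s \<in> terms n" using ka b(1) unfolding s_def terms_def by simp
    have ds: "tdeg n s = tdeg n a" unfolding s_def tdeg_add using b(2) tdeg_key[of n a] by simp
    show "(\<lambda>i. key a i + b i) \<in> L"
    proof (cases "s = a")
      case True then show ?thesis using aL s_def by simp
    next
      case False
      have "\<forall>i>n. a i = s i" using a sT terms_zero by metis
      then have "lex_less a s \<or> lex_less s a" using lex_total False by metis
      moreover have "\<not> lex_less s a"
      proof
        assume "lex_less s a"
        then obtain k where k: "s k < a k" "\<forall>i>k. s i = a i" unfolding lex_less_def by blast
        show False
        proof (cases "k = 0")
          case False then have "s k \<ge> a k" unfolding s_def key_def by simp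
          then show False using k(1) by simp
        next
          case True
          have "key b = (\<lambda>i. 0)"
          proof
            fix i show "key b i = 0"
            proof (cases "i = 0")
              case False
              then have "s i = a i" using k(2) True by simp
              then show ?thesis using False unfolding s_def key_def by simp
            qed (simp add: key_def)
          qed
          then have "tdeg n (key b) = 0" by (simp add: tdeg_def)
          then have "tdeg n b = b 0" using tdeg_key[of n b] by simp
          moreover have "s 0 = b 0" unfolding s_def key_def by simp
          ultimately show False using k(1) True b(2) by simp
        qed
      qed
      ultimately have "lex_less a s" by simp
      then show ?thesis using segp aL sT ds s_def by blast
    qed
  qed
  then show "key a \<in> L" using sat ka unfolding saturated_def by blast
qed

lemma up_mem:
  assumes seg: "segment_ideal lex_less n L" and sat: "saturated n L"
    and aL: "a \<in> L" and b: "b \<in> terms n" and lt: "lex_less (key a) (key b)"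
  shows "b \<in> L"
proof -
  have mi: "monomial_ideal n L" using seg segment_ideal_def by blast
  have segp: "\<forall>a\<in>L. \<forall>b\<in>terms n. tdeg n b = tdeg n a \<and> lex_less a b \<longrightarrow> b \<in> L"
    using seg segment_ideal_def by blast
  have aT: "a \<in> terms n" using mi aL unfolding monomial_ideal_def by blast
  have kaL: "key a \<in> L" using key_mem[OF seg sat aT] aL by simp
  define a' where "a' = (\<lambda>i. key a i + (if i = 0 then tdeg n (key b) else 0))"
  define b' where "b' = (\<lambda>i. key b i + (if i = 0 then tdeg n (key a) else 0))"
  have a'L: "a' \<in> L" unfolding a'_def by (rule ideal_add[OF mi kaL e0_terms])
  have b'T: "b' \<in> terms n" using key_terms[OF b] unfolding b'_def terms_def by simp
  have deg: "tdeg n b' = tdeg n a'" unfolding a'_def b'_def tdeg_add tdeg_e0 by simp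
  obtain k where k: "key a k < key b k" "\<forall>i>k. key a i = key b i" using lt unfolding lex_less_def by blast
  have k0: "k \<noteq> 0" using k(1) unfolding key_def by (cases "k = 0") simp_all
  have "lex_less a' b'" unfolding lex_less_def
  proof (intro exI[of _ k] conjI allI impI)
    show "a' k < b' k" using k(1) k0 unfolding a'_def b'_def by simp
    fix i assume "k < i"
    then show "a' i = b' i" using k(2) k0 unfolding a'_def b'_def by simp
  qed
  then have "b' \<in> L" using segp a'L b'T deg by blast
  then have "key b' \<in> L" using key_mem[OF seg sat b'T] by simp
  moreover have "key b' = key b" unfolding b'_def key_def by (rule ext) simp
  ultimately have "key b \<in> L" by simp
  then show ?thesis using key_mem[OF seg sat b] by simp
qed

lemma structure_thm:
  assumes seg: "segment_ideal lex_less n L" and sat: "saturated n L" and ne: "L \<noteq> {}"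
  shows "\<exists>c\<in>terms n. c 0 = 0 \<and> L = LL n c"
proof -
  have mi: "monomial_ideal n L" using seg segment_ideal_def by blast
  have LT: "L \<subseteq> terms n" using mi monomial_ideal_def by blast
  have "key ` L \<subseteq> terms n" using LT key_terms by blast
  moreover have "key ` L \<noteq> {}" using ne by simp
  ultimately obtain c where c: "c \<in> key ` L" "\<forall>b\<in>key ` L. \<not> lex_less b c"
    using lex_min_exists by blast
  then obtain c0 where c0: "c0 \<in> L" "c = key c0" by blast
  have cT: "c \<in> terms n" using c0 LT key_terms by blast
  have c00: "c 0 = 0" using c0 by (simp add: key_def)
  have cL: "c \<in> L" using key_mem[OF seg sat, of c0] c0 LT by blast
  have "L = LL n c"
  proof
    show "L \<subseteq> LL n c" unfolding LL_def using c(2) LT by blast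
    show "LL n c \<subseteq> L"
    proof
      fix a assume "a \<in> LL n c"
      then have aT: "a \<in> terms n" and nl: "\<not> lex_less (key a) c" unfolding LL_def by auto
      show "a \<in> L"
      proof (cases "key a = c")
        case True then show ?thesis using key_mem[OF seg sat aT] cL by simp
      next
        case False
        have "\<forall>i>n. key a i = c i" using key_terms[OF aT] cT terms_zero by metis
        then have "lex_less c (key a)" using lex_total False nl by metis
        then have "lex_less (key c) (key a)" using c0 key_key by simp
        then show ?thesis using up_mem[OF seg sat cL aT] by simp
      qed
    qed
  qed
  then show ?thesis using cT c00 by blast
qed

definition mg :: "(nat \<Rightarrow> nat) \<Rightarrow> nat \<Rightarrow> nat \<Rightarrow> nat" where
  "mg c w = (\<lambda>l. if w < l then c l else if l = w then c w + 1 else 0)"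

definition BAD :: "nat \<Rightarrow> (nat \<Rightarrow> nat) \<Rightarrow> bool" where
  "BAD n c \<longleftrightarrow> (\<exists>j m. 1 \<le> j \<and> j + 2 \<le> m \<and> m \<le> n \<and> 0 < c j \<and> 0 < c m)"

lemma key_id: "a 0 = 0 \<Longrightarrow> key a = a"
  unfolding key_def by (rule ext) simp

lemma le_lex:
  assumes "\<forall>i. b i \<le> c i" "b \<noteq> c" "c \<in> terms n"
  shows "lex_less b c"
proof -
  have "\<forall>i>n. b i = c i"
  proof (intro allI impI)
    fix i assume "n < i"
    then have "c i = 0" using assms(3) terms_zero by blast
    then show "b i = c i" using assms(1)[rule_format, of i] by simp
  qed
  then have "lex_less b c \<or> lex_less c b" using lex_total[OF _ assms(2)] by blast
  moreover have "\<not> lex_less c b"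
  proof
    assume "lex_less c b"
    then obtain w where "c w < b w" unfolding lex_less_def by blast
    moreover have "b w \<le> c w" using assms(1) by blast
    ultimately show False by simp
  qed
  ultimately show ?thesis by simp
qed

lemma le_terms: "\<forall>i. b i \<le> c i \<Longrightarrow> c \<in> terms n \<Longrightarrow> b \<in> terms n"
proof -
  assume le: "\<forall>i. b i \<le> c i" and cT: "c \<in> terms n"
  have "\<forall>i>n. b i = 0"
  proof (intro allI impI)
    fix i assume "n < i" then have "c i = 0" using cT terms_zero by blast
    then show "b i = 0" using le[rule_format, of i] by simp
  qed
  then show ?thesis unfolding terms_def by simp
qed

lemma LL_iff: "a \<in> LL n c \<longleftrightarrow> a \<in> terms n \<and> \<not> lex_less (key a) c"
  by (simp add: LL_def)

lemma c_in_LL: "c \<in> terms n \<Longrightarrow> c 0 = 0 \<Longrightarrow> c \<in> LL n c"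
  by (simp add: LL_iff key_id lex_irrefl)

lemma min_gen_a0:
  assumes "min_gen (LL n c) a"
  shows "a 0 = 0"
proof (rule ccontr)
  assume ne: "a 0 \<noteq> 0"
  have aL: "a \<in> LL n c" using assms min_gen_def by blast
  define a' where "a' = a(0 := a 0 - 1)"
  have le: "\<forall>i. a' i \<le> a i" unfolding a'_def by simp
  have aT: "a \<in> terms n" using aL LL_iff by blast
  have a'T: "a' \<in> terms n" using le_terms[OF le aT] .
  have "key a' = key a" unfolding a'_def key_def by (rule ext) simp
  then have "a' \<in> LL n c" using aL a'T LL_iff by simp
  moreover have "tdvd a' a" using le tdvd_def by blast
  ultimately have "a' = a" using assms min_gen_def by blast
  moreover have "a' 0 = a 0 - 1" unfolding a'_def by simp
  ultimately show False using ne by simp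
qed

lemma min_gen_c:
  assumes cT: "c \<in> terms n" and c0: "c 0 = 0"
  shows "min_gen (LL n c) c"
  unfolding min_gen_def
proof (intro conjI ballI impI)
  show "c \<in> LL n c" using c_in_LL[OF cT c0] .
  fix b assume b: "b \<in> LL n c" "tdvd b c"
  show "b = c"
  proof (rule ccontr)
    assume ne: "b \<noteq> c"
    have le: "\<forall>i. b i \<le> c i" using b(2) tdvd_def by blast
    then have "b 0 = 0" using c0 le[rule_format, of 0] by simp
    then have "key b = b" by (rule key_id)
    moreover have "lex_less b c" using le_lex[OF le ne cT] .
    ultimately show False using b(1) LL_iff by simp
  qed
qed

lemma mg_terms: "w \<le> n \<Longrightarrow> c \<in> terms n \<Longrightarrow> mg c w \<in> terms n"
  unfolding mg_def terms_def by auto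

lemma mg_0: "0 < w \<Longrightarrow> mg c w 0 = 0"
  unfolding mg_def by simp

lemma lex_c_mg: "lex_less c (mg c w)"
  unfolding lex_less_def mg_def by (intro exI[of _ w]) simp

lemma mg_in_LL: "0 < w \<Longrightarrow> w \<le> n \<Longrightarrow> c \<in> terms n \<Longrightarrow> mg c w \<in> LL n c"
proof -
  assume "0 < w" "w \<le> n" "c \<in> terms n"
  then have "mg c w \<in> terms n" "key (mg c w) = mg c w" using mg_terms key_id mg_0 by auto
  moreover have "\<not> lex_less (mg c w) c" using lex_asym[OF lex_c_mg] .
  ultimately show ?thesis using LL_iff by simp
qed

lemma min_gen_char:
  assumes cT: "c \<in> terms n" and c0: "c 0 = 0" and mgen: "min_gen (LL n c) a" and ne: "a \<noteq> c"
  shows "\<exists>w j. j < w \<and> 0 < c j \<and> a = mg c w \<and> 1 \<le> w \<and> w \<le> n"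
proof -
  have aL: "a \<in> LL n c" using mgen min_gen_def by blast
  have a0: "a 0 = 0" using min_gen_a0[OF mgen] .
  have aT: "a \<in> terms n" using aL LL_iff by blast
  have nl: "\<not> lex_less a c" using aL LL_iff key_id[of a, OF a0] by simp
  have "\<forall>i>n. a i = c i" using aT cT unfolding terms_def by simp
  then have "lex_less c a" using lex_total[OF _ ne] nl by blast
  then obtain w where w: "c w < a w" "\<forall>i>w. c i = a i" unfolding lex_less_def by blast
  have w0: "0 < w" using w(1) a0 by (cases "w = 0") simp_all
  have wn: "w \<le> n"
  proof (rule ccontr)
    assume "\<not> w \<le> n" then have "a w = 0" using aT terms_zero by simp
    then show False using w(1) by simp
  qed
  define g where "g = mg c w"
  have gle: "\<forall>i. g i \<le> a i"
  proof
    fix i show "g i \<le> a i"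
      using w unfolding g_def mg_def by (cases "w < i"; cases "i = w") auto
  qed
  have gL: "g \<in> LL n c" unfolding g_def using mg_in_LL[OF w0 wn cT] .
  have ga: "g = a" using mgen gL gle unfolding min_gen_def tdvd_def by blast
  have "\<exists>j<w. 0 < c j"
  proof (rule ccontr)
    assume "\<not> (\<exists>j<w. 0 < c j)"
    then have z: "\<forall>j<w. c j = 0" by simp
    have "\<forall>i. c i \<le> a i"
    proof
      fix i show "c i \<le> a i"
        using z ga unfolding g_def mg_def by (cases "w < i"; cases "i = w") auto
    qed
    then have "c = a" using mgen c_in_LL[OF cT c0] unfolding min_gen_def tdvd_def by blast
    then show False using ne by simp
  qed
  then obtain j where "j < w" "0 < c j" by blast
  then show ?thesis using ga g_def w0 wn by (intro exI[of _ w] exI[of _ j]) simp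
qed

lemma min_gen_mg:
  assumes cT: "c \<in> terms n" and c0: "c 0 = 0" and jw: "j < w" and cj: "0 < c j" and wn: "w \<le> n"
  shows "min_gen (LL n c) (mg c w)"
  unfolding min_gen_def
proof (intro conjI ballI impI)
  have w0: "0 < w" using jw by simp
  show "mg c w \<in> LL n c" using mg_in_LL[OF w0 wn cT] .
  fix b assume b: "b \<in> LL n c" "tdvd b (mg c w)"
  show "b = mg c w"
  proof (rule ccontr)
    assume ne: "b \<noteq> mg c w"
    have le: "\<forall>i. b i \<le> mg c w i" using b(2) tdvd_def by blast
    then have "b 0 = 0" using mg_0[OF w0] le[rule_format, of 0] by simp
    then have kb: "key b = b" by (rule key_id)
    have "lex_less b (mg c w)" using le_lex[OF le ne mg_terms[OF wn cT]] .
    then obtain l where l: "b l < mg c w l" "\<forall>i>l. b i = mg c w i" unfolding lex_less_def by blast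
    have "lex_less b c"
    proof (cases "w < l")
      case True
      then have "b l < c l" using l(1) unfolding mg_def by simp
      moreover have "\<forall>i>l. b i = c i" using l(2) True unfolding mg_def by simp
      ultimately show ?thesis unfolding lex_less_def by blast
    next
      case False
      then have lw: "l \<le> w" by simp
      have "l = w"
      proof (rule ccontr)
        assume "l \<noteq> w" then have "l < w" using lw by simp
        then show False using l(1) unfolding mg_def by simp
      qed
      have up: "\<forall>i>w. b i = c i" using l(2) \<open>l = w\<close> unfolding mg_def by simp
      have bw: "b w \<le> c w" using l(1) \<open>l = w\<close> unfolding mg_def by simp
      show ?thesis
      proof (cases "b w < c w")
        case True then show ?thesis using up unfolding lex_less_def by blast
      next
        case False
        then have bweq: "b w = c w" using bw by simp
        have lec: "\<forall>i. b i \<le> c i"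
        proof
          fix i show "b i \<le> c i"
          proof (cases "w < i")
            case True then show ?thesis using up by simp
          next
            case False
            show ?thesis
            proof (cases "i = w")
              case True then show ?thesis using bweq by simp
            next
              case False
              then have "i < w" using \<open>\<not> w < i\<close> by simp
              then have "mg c w i = 0" unfolding mg_def by simp
              then have "b i = 0" using le[rule_format, of i] by simp
              then show ?thesis by simp
            qed
          qed
        qed
        have "mg c w j = 0" using jw unfolding mg_def by simp
        then have "b j = 0" using le[rule_format, of j] by simp
        then have "b \<noteq> c" using cj by auto
        then show ?thesis using le_lex[OF lec _ cT] by simp
      qed
    qed
    then show False using b(1) kb LL_iff by simp
  qed
qed

lemma borel_LL:
  assumes cT: "c \<in> terms n"
  shows "borel n (LL n c)"
  unfolding borel_def
proof (intro ballI allI impI)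
  fix a i j assume aL: "a \<in> LL n c" and h: "j < i \<and> i \<le> n \<and> 0 < a j"
  define b where "b = (\<lambda>k. if k = j then a k - 1 else if k = i then a k + 1 else a k)"
  have aT: "a \<in> terms n" using aL LL_iff by blast
  have bT: "b \<in> terms n" using aT h unfolding b_def terms_def by auto
  have "lex_less (key a) (key b)" unfolding lex_less_def
  proof (intro exI[of _ i] conjI allI impI)
    show "key a i < key b i" using h unfolding key_def b_def by simp
    fix k assume "i < k" then show "key a k = key b k" using h unfolding key_def b_def by simp
  qed
  moreover have "\<not> lex_less (key a) c" using aL LL_iff by blast
  ultimately have "\<not> lex_less (key b) c" using lex_trans by blast
  then show "(\<lambda>k. if k = j then a k - 1 else if k = i then a k + 1 else a k) \<in> LL n c"
    using bT LL_iff b_def by simp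
qed

definition ek :: "nat \<Rightarrow> nat \<Rightarrow> nat \<Rightarrow> nat" where
  "ek l k = (\<lambda>i. if i = l then k else 0)"

lemma tdeg_ek: "l \<le> n \<Longrightarrow> tdeg n (ek l k) = k"
  unfolding tdeg_def ek_def by simp

lemma ek_terms: "l \<le> n \<Longrightarrow> ek l k \<in> terms n"
  unfolding terms_def ek_def by simp

lemma tdeg_mg_one:
  assumes "\<forall>l\<ge>w. c l = 0" "w \<le> n"
  shows "tdeg n (mg c w) = 1"
proof -
  have "mg c w = ek w 1" unfolding mg_def ek_def using assms(1) by (intro ext) simp
  then show ?thesis using tdeg_ek[OF assms(2)] by simp
qed

lemma min_gen_of_not_prev:
  assumes mi: "monomial_ideal n L" and bL: "b \<in> L" and np: "\<not> in_gen_prev n L (tdeg n b) b"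
  shows "min_gen L b"
  unfolding min_gen_def
proof (intro conjI ballI impI)
  show "b \<in> L" by fact
  fix b' assume b': "b' \<in> L" "tdvd b' b"
  show "b' = b"
  proof (rule ccontr)
    assume ne: "b' \<noteq> b"
    have le: "\<forall>i. b' i \<le> b i" using b'(2) tdvd_def by blast
    obtain l where "b' l \<noteq> b l" using ne by auto
    then have lt: "b' l < b l" using le le_neq_implies_less by blast
    have bT: "b \<in> terms n" using mi bL monomial_ideal_def by blast
    have ln: "l \<le> n"
    proof (rule ccontr)
      assume "\<not> l \<le> n" then have "b l = 0" using bT terms_zero by simp
      then show False using lt by simp
    qed
    define b'' where "b'' = b(l := b l - 1)"
    have le2: "\<forall>i. b' i \<le> b'' i" using le lt unfolding b''_def by simp
    have le3: "\<forall>i. b'' i \<le> b i" unfolding b''_def by simp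
    have b''T: "b'' \<in> terms n" using le_terms[OF le3 bT] .
    have dT: "(\<lambda>i. b'' i - b' i) \<in> terms n" using b''T unfolding terms_def by simp
    have "(\<lambda>i. b' i + (b'' i - b' i)) = b''" using le2 by (intro ext) simp
    then have b''L: "b'' \<in> L" using ideal_add[OF mi b'(1) dT] by simp
    have "(\<lambda>i. b'' i + ek l 1 i) = b" unfolding b''_def ek_def using lt by (intro ext) simp
    then have "tdeg n b'' + 1 = tdeg n b" using tdeg_add[of n b'' "ek l 1"] tdeg_ek[OF ln] by simp
    moreover have "tdvd b'' b" using le3 tdvd_def by blast
    ultimately have "in_gen_prev n L (tdeg n b) b" unfolding in_gen_prev_def using b''L by blast
    then show False using np by simp
  qed
qed

lemma notbad_mem:
  assumes nb: "\<not> BAD n c" and cT: "c \<in> terms n" and c0: "c 0 = 0"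
    and mgen: "min_gen (LL n c) a" and bT: "b \<in> terms n" and deg: "tdeg n b = tdeg n a"
    and rl: "revlex_less a b"
  shows "b \<in> LL n c"
proof (rule ccontr)
  assume "b \<notin> LL n c"
  then have lkb: "lex_less (key b) c" using bT LL_iff by simp
  have a0: "a 0 = 0" using min_gen_a0[OF mgen] .
  have aL: "a \<in> LL n c" using mgen min_gen_def by blast
  have aT: "a \<in> terms n" using aL LL_iff by blast
  obtain h where h: "b h < a h" "\<forall>i<h. a i = b i" using rl unfolding revlex_less_def by blast
  have h0: "h \<noteq> 0" using h(1) a0 by (cases "h = 0") simp_all
  then have "b 0 = 0" using h(2) a0 by simp
  then have "key b = b" by (rule key_id)
  then have "lex_less b c" using lkb by simp
  then obtain w where w: "b w < c w" "\<forall>i>w. b i = c i" unfolding lex_less_def by blast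
  have cw: "0 < c w" using w(1) by simp
  have wn: "w \<le> n"
  proof (rule ccontr)
    assume "\<not> w \<le> n" then have "c w = 0" using cT terms_zero by simp
    then show False using cw by simp
  qed
  have le: "\<forall>l. b l \<le> a l"
  proof (cases "a = c")
    case True
    have ch: "0 < c h" using h(1) True by simp
    show ?thesis
    proof
      fix l
      show "b l \<le> a l"
      proof (cases "l < h")
        case True then show ?thesis using h(2) by simp
      next
        case nlh: False
        show ?thesis
        proof (cases "l = h")
          case True then show ?thesis using h(1) by simp
        next
          case nlh2: False
          show ?thesis
          proof (cases "w < l")
            case True then show ?thesis using w(2) \<open>a = c\<close> by simp
          next
            case False
            show ?thesis
            proof (cases "l = w")
              case True then show ?thesis using w(1) \<open>a = c\<close> by simp
            next
              case False
              then have "h + 2 \<le> w" using nlh nlh2 \<open>\<not> w < l\<close> by simp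
              then have "BAD n c" unfolding BAD_def using h0 ch cw wn
                by (intro exI[of _ h] exI[of _ w]) simp
              then show ?thesis using nb by simp
            qed
          qed
        qed
      qed
    qed
  next
    case False
    then obtain i j where ij: "j < i" "0 < c j" "a = mg c i" "1 \<le> i" "i \<le> n"
      using min_gen_char[OF cT c0 mgen] by blast
    have j1: "1 \<le> j" using ij(2) c0 by (cases "j = 0") simp_all
    have hi: "i \<le> h"
    proof (rule ccontr)
      assume "\<not> i \<le> h" then have "a h = 0" using ij(3) unfolding mg_def by simp
      then show False using h(1) by simp
    qed
    show ?thesis
    proof
      fix l
      show "b l \<le> a l"
      proof (cases "l < h")
        case True then show ?thesis using h(2) by simp
      next
        case nlh: False
        show ?thesis
        proof (cases "l = h")
          case True then show ?thesis using h(1) by simp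
        next
          case nlh2: False
          then have il: "i \<le> l" using hi nlh by simp
          show ?thesis
          proof (cases "w < l")
            case True then have "b l = c l" using w(2) by simp
            moreover have "c l \<le> a l" using il ij(3) unfolding mg_def by simp
            ultimately show ?thesis by simp
          next
            case False
            then have "\<not> j + 2 \<le> w" using nb unfolding BAD_def using j1 ij(2) cw wn by blast
            then have "l = w" "i = w" using False il ij(1) by simp_all
            then show ?thesis using w(1) ij(3) unfolding mg_def by simp
          qed
        qed
      qed
    qed
  qed
  have "b \<noteq> a" using h(1) by auto
  then have "tdeg n b < tdeg n a" using tdeg_strict[OF bT aT le] by simp
  then show False using deg by simp
qed

lemma notbad_card:
  assumes nb: "\<not> BAD n c" and cT: "c \<in> terms n" and c0: "c 0 = 0"
  shows "card {a. min_gen (LL n c) a \<and> 1 < tdeg n a} \<le> 2"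
proof -
  define I where "I = {i. 2 \<le> i \<and> i \<le> n \<and> 0 < c i \<and> 0 < c (i - 1)}"
  have finI: "finite I" unfolding I_def by (rule finite_subset[of _ "{..n}"]) auto
  have sub: "{a. min_gen (LL n c) a \<and> 1 < tdeg n a} \<subseteq> insert c (mg c ` I)"
  proof
    fix a assume "a \<in> {a. min_gen (LL n c) a \<and> 1 < tdeg n a}"
    then have mgen: "min_gen (LL n c) a" and dg: "1 < tdeg n a" by auto
    show "a \<in> insert c (mg c ` I)"
    proof (cases "a = c")
      case True then show ?thesis by simp
    next
      case False
      then obtain w j where wj: "j < w" "0 < c j" "a = mg c w" "1 \<le> w" "w \<le> n"
        using min_gen_char[OF cT c0 mgen] by blast
      have j1: "1 \<le> j" using wj(2) c0 by (cases "j = 0") simp_all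
      have "\<exists>l\<ge>w. 0 < c l"
      proof (rule ccontr)
        assume "\<not> (\<exists>l\<ge>w. 0 < c l)"
        then have "\<forall>l\<ge>w. c l = 0" by simp
        then have "tdeg n a = 1" using tdeg_mg_one wj(3) wj(5) by simp
        then show False using dg by simp
      qed
      then obtain l where l: "w \<le> l" "0 < c l" by blast
      have ln: "l \<le> n"
      proof (rule ccontr)
        assume "\<not> l \<le> n" then have "c l = 0" using cT terms_zero by simp
        then show False using l(2) by simp
      qed
      have "\<not> j + 2 \<le> l" using nb unfolding BAD_def using j1 wj(2) l(2) ln by blast
      then have "w = j + 1" "l = w" using l(1) wj(1) by simp_all
      then have "w \<in> I" unfolding I_def using l(2) wj(2) wj(5) j1 by simp
      then show ?thesis using wj(3) by simp
    qed
  qed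
  have cI: "card I \<le> 1"
  proof -
    have "\<forall>x\<in>I. \<forall>y\<in>I. x = y"
    proof (intro ballI)
      fix x y assume xy: "x \<in> I" "y \<in> I"
      show "x = y"
      proof (rule ccontr)
        assume "x \<noteq> y"
        then consider "x < y" | "y < x" by linarith
        then show False
        proof cases
          case 1
          then have "BAD n c" unfolding BAD_def using xy unfolding I_def
            by (intro exI[of _ "x - 1"] exI[of _ y]) auto
          then show False using nb by simp
        next
          case 2
          then have "BAD n c" unfolding BAD_def using xy unfolding I_def
            by (intro exI[of _ "y - 1"] exI[of _ x]) auto
          then show False using nb by simp
        qed
      qed
    qed
    then show ?thesis using card_le_Suc0_iff_eq[OF finI] by simp
  qed
  have "card (insert c (mg c ` I)) \<le> Suc (card (mg c ` I))"
    using card_insert_if[of "mg c ` I" c] finI by (simp split: if_splits)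
  also have "\<dots> \<le> Suc (card I)" using card_image_le[OF finI] by simp
  finally have "card (insert c (mg c ` I)) \<le> 2" using cI by simp
  moreover have "card {a. min_gen (LL n c) a \<and> 1 < tdeg n a} \<le> card (insert c (mg c ` I))"
    by (rule card_mono) (use finI sub in auto)
  ultimately show ?thesis by simp
qed

lemma notbad_genseg:
  assumes nb: "\<not> BAD n c" and cT: "c \<in> terms n" and c0: "c 0 = 0"
    and mi: "monomial_ideal n (LL n c)" and sat: "saturated n (LL n c)"
  shows "gen_segment revlex_less n (LL n c)"
  unfolding gen_segment_def
proof (intro conjI allI impI)
  show "monomial_ideal n (LL n c)" by fact
  show "LL n c \<noteq> {}" using c_in_LL[OF cT c0] by auto
  show "saturated n (LL n c)" by fact
  show "borel n (LL n c)" using borel_LL[OF cT] .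
  fix s a b
  assume H: "min_gen (LL n c) a \<and> tdeg n a = s \<and> b \<in> terms n \<and> tdeg n b = s \<and>
        \<not> in_gen_prev n (LL n c) s b \<and> revlex_less a b"
  then have "b \<in> LL n c" using notbad_mem[OF nb cT c0] by auto
  then show "min_gen (LL n c) b" using min_gen_of_not_prev[OF mi] H by auto
qed

lemma bad_not_genseg:
  assumes bad: "BAD n c" and cT: "c \<in> terms n" and c0: "c 0 = 0"
    and mi: "monomial_ideal n (LL n c)"
  shows "\<not> gen_segment revlex_less n (LL n c)"
proof
  assume gs: "gen_segment revlex_less n (LL n c)"
  obtain j m where jm: "1 \<le> j" "j + 2 \<le> m" "m \<le> n" "0 < c j" "0 < c m"
    using bad unfolding BAD_def by blast
  define b where "b = (\<lambda>i. if i = j then c j - 1 else if i = j + 1 then c (j + 1) + 2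
                     else if i = m then c m - 1 else c i)"
  have bT: "b \<in> terms n" using cT jm unfolding b_def terms_def by auto
  have e1: "(\<lambda>i. (\<lambda>i. b i + ek j 1 i) i + ek m 1 i) = (\<lambda>i. c i + ek (j + 1) 2 i)"
    unfolding b_def ek_def using jm by (intro ext) auto
  have "tdeg n b + 2 = tdeg n c + 2"
  proof -
    have "tdeg n (\<lambda>i. (\<lambda>i. b i + ek j 1 i) i + ek m 1 i) = tdeg n b + 2"
      unfolding tdeg_add using tdeg_ek jm by simp
    moreover have "tdeg n (\<lambda>i. c i + ek (j + 1) 2 i) = tdeg n c + 2"
      unfolding tdeg_add using tdeg_ek jm by simp
    ultimately show ?thesis using e1 by simp
  qed
  then have deg: "tdeg n b = tdeg n c" by simp
  have rl: "revlex_less c b" unfolding revlex_less_def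
  proof (intro exI[of _ j] conjI allI impI)
    show "b j < c j" unfolding b_def using jm by simp
    fix i assume "i < j" then show "c i = b i" unfolding b_def using jm by simp
  qed
  have b0: "b 0 = 0" unfolding b_def using jm c0 by simp
  have "lex_less b c" unfolding lex_less_def
  proof (intro exI[of _ m] conjI allI impI)
    show "b m < c m" unfolding b_def using jm by simp
    fix i assume "m < i" then show "b i = c i" unfolding b_def using jm by simp
  qed
  then have bnot: "b \<notin> LL n c" using LL_iff key_id[of b, OF b0] by simp
  have np: "\<not> in_gen_prev n (LL n c) (tdeg n c) b"
  proof
    assume "in_gen_prev n (LL n c) (tdeg n c) b"
    then obtain b' where b': "b' \<in> LL n c" "tdvd b' b" unfolding in_gen_prev_def by blast
    have le: "\<forall>i. b' i \<le> b i" using b'(2) tdvd_def by blast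
    have dT: "(\<lambda>i. b i - b' i) \<in> terms n" using bT unfolding terms_def by simp
    have "(\<lambda>i. b' i + (b i - b' i)) = b" using le by (intro ext) simp
    then have "b \<in> LL n c" using ideal_add[OF mi b'(1) dT] by simp
    then show False using bnot by simp
  qed
  have "min_gen (LL n c) b"
    using gs min_gen_c[OF cT c0] bT deg np rl unfolding gen_segment_def by blast
  then show False using bnot min_gen_def by blast
qed

lemma bad_card:
  assumes bad: "BAD n c" and cT: "c \<in> terms n" and c0: "c 0 = 0"
  shows "3 \<le> card {a. min_gen (LL n c) a \<and> 1 < tdeg n a}"
proof -
  obtain j m where jm: "1 \<le> j" "j + 2 \<le> m" "m \<le> n" "0 < c j" "0 < c m"
    using bad unfolding BAD_def by blast
  have fin: "finite {a. min_gen (LL n c) a \<and> 1 < tdeg n a}"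
  proof (rule finite_subset)
    show "{a. min_gen (LL n c) a \<and> 1 < tdeg n a} \<subseteq> insert c (mg c ` {..n})"
    proof
      fix a assume "a \<in> {a. min_gen (LL n c) a \<and> 1 < tdeg n a}"
      then have mgen: "min_gen (LL n c) a" by simp
      show "a \<in> insert c (mg c ` {..n})"
      proof (cases "a = c")
        case False
        then obtain w j where "j < w" "0 < c j" "a = mg c w" "1 \<le> w" "w \<le> n"
          using min_gen_char[OF cT c0 mgen] by blast
        then show ?thesis by simp
      qed simp
    qed
  qed simp
  have "j \<noteq> m" using jm by simp
  have d1: "1 < tdeg n c" using tdeg_ge2[of j n m c] jm by simp
  have d2: "1 < tdeg n (mg c m)" using tdeg_ge[of m n "mg c m"] jm unfolding mg_def by simp
  have "mg c (j + 1) (j + 1) + mg c (j + 1) m \<le> tdeg n (mg c (j + 1))"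
    using tdeg_ge2[of "j + 1" n m "mg c (j + 1)"] jm by simp
  then have d3: "1 < tdeg n (mg c (j + 1))" using jm unfolding mg_def by simp
  have g1: "min_gen (LL n c) (mg c m)" using min_gen_mg[OF cT c0, of j m] jm by simp
  have g2: "min_gen (LL n c) (mg c (j + 1))" using min_gen_mg[OF cT c0, of j "j + 1"] jm by simp
  have n1: "c \<noteq> mg c m"
  proof
    assume "c = mg c m" then have "c j = mg c m j" by simp
    then show False using jm unfolding mg_def by simp
  qed
  have n2: "c \<noteq> mg c (j + 1)"
  proof
    assume "c = mg c (j + 1)" then have "c j = mg c (j + 1) j" by simp
    then show False using jm unfolding mg_def by simp
  qed
  have n3: "mg c m \<noteq> mg c (j + 1)"
  proof
    assume "mg c m = mg c (j + 1)" then have "mg c m m = mg c (j + 1) m" by simp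
    then show False using jm unfolding mg_def by simp
  qed
  have "{c, mg c m, mg c (j + 1)} \<subseteq> {a. min_gen (LL n c) a \<and> 1 < tdeg n a}"
    using d1 d2 d3 g1 g2 min_gen_c[OF cT c0] by simp
  then have "card {c, mg c m, mg c (j + 1)} \<le> card {a. min_gen (LL n c) a \<and> 1 < tdeg n a}"
    using card_mono[OF fin] by blast
  moreover have "card {c, mg c m, mg c (j + 1)} = 3" using n1 n2 n3 by simp
  ultimately show ?thesis by simp
qed

lemma poly_growth:
  fixes p :: "rat poly" and h :: "nat \<Rightarrow> nat"
  assumes ev: "\<forall>t\<ge>t0. of_nat (h t) = poly p (of_nat t)" and d1: "1 \<le> d"
    and lb: "\<forall>N. (N + 1) ^ d \<le> h (d * N)"
  shows "d \<le> degree p"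
proof (rule ccontr)
  assume "\<not> d \<le> degree p"
  then have dp: "degree p \<le> d - 1" by simp
  define C where "C = (\<Sum>i\<le>degree p. \<bar>coeff p i\<bar>)"
  have bound: "poly p x \<le> C * x ^ (d - 1)" if x1: "1 \<le> x" for x :: rat
  proof -
    have "poly p x = (\<Sum>i\<le>degree p. coeff p i * x ^ i)" by (rule poly_altdef)
    also have "\<dots> \<le> (\<Sum>i\<le>degree p. \<bar>coeff p i\<bar> * x ^ (d - 1))"
    proof (rule sum_mono)
      fix i assume "i \<in> {..degree p}"
      then have "i \<le> d - 1" using dp by simp
      then have xi: "x ^ i \<le> x ^ (d - 1)" using power_increasing x1 by blast
      have x0: "0 \<le> x ^ i" using x1 by simp
      have "coeff p i * x ^ i \<le> \<bar>coeff p i\<bar> * x ^ i"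
        using mult_right_mono[OF abs_ge_self x0] by simp
      also have "\<dots> \<le> \<bar>coeff p i\<bar> * x ^ (d - 1)"
        using mult_left_mono[OF xi abs_ge_zero] by simp
      finally show "coeff p i * x ^ i \<le> \<bar>coeff p i\<bar> * x ^ (d - 1)" .
    qed
    also have "\<dots> = C * x ^ (d - 1)" unfolding C_def by (simp add: sum_distrib_right)
    finally show ?thesis .
  qed
  obtain n0 :: nat where n0: "C * of_nat d ^ (d - 1) < of_nat n0" using reals_Archimedean2 by blast
  define N where "N = t0 + 1 + n0"
  have N1: "1 \<le> N" unfolding N_def by simp
  have "1 * N \<le> d * N" using mult_le_mono1[OF d1] .
  then have Nt: "t0 \<le> d * N" unfolding N_def by simp
  have big: "C * of_nat d ^ (d - 1) < (of_nat N :: rat)" using n0 unfolding N_def by simp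
  have "(N + 1) ^ d \<le> h (d * N)" using lb by blast
  then have "(of_nat ((N + 1) ^ d) :: rat) \<le> of_nat (h (d * N))" by (simp only: of_nat_le_iff)
  also have "\<dots> = poly p (of_nat (d * N))" using ev Nt by simp
  also have "\<dots> \<le> C * (of_nat (d * N)) ^ (d - 1)"
  proof -
    have dN: "1 * 1 \<le> d * N" using mult_le_mono[OF d1 N1] .
    have "1 \<le> d * N" using dN by simp
    then have "(of_nat 1::rat) \<le> of_nat (d * N)" by (simp only: of_nat_le_iff)
    then have "(1::rat) \<le> of_nat (d * N)" unfolding of_nat_1 .
    then show ?thesis using bound by blast
  qed
  also have "\<dots> = (C * of_nat d ^ (d - 1)) * (of_nat N) ^ (d - 1)"
    by (simp add: power_mult_distrib)
  also have "\<dots> < of_nat N * (of_nat N) ^ (d - 1)"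
  proof -
    have pos: "(0::rat) < of_nat N ^ (d - 1)" using N1 by simp
    show ?thesis using mult_strict_right_mono[OF big pos] .
  qed
  also have "\<dots> = (of_nat N) ^ d"
  proof -
    have "d = Suc (d - 1)" using d1 by simp
    then show ?thesis by (metis power_Suc)
  qed
  also have "\<dots> \<le> (of_nat (N + 1)) ^ d" by (rule power_mono) simp_all
  finally have "(of_nat ((N + 1) ^ d) :: rat) < (of_nat (N + 1)) ^ d" .
  then show False by (simp only: of_nat_power less_irrefl)
qed

lemma fin_deg: "finite {a \<in> terms n. tdeg n a = t}"
proof (rule finite_subset)
  show "{a \<in> terms n. tdeg n a = t} \<subseteq> {f. \<forall>x. (x \<in> {..n} \<longrightarrow> f x \<in> {..t}) \<and> (x \<notin> {..n} \<longrightarrow> f x = 0)}"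
  proof
    fix a assume a: "a \<in> {a \<in> terms n. tdeg n a = t}"
    show "a \<in> {f. \<forall>x. (x \<in> {..n} \<longrightarrow> f x \<in> {..t}) \<and> (x \<notin> {..n} \<longrightarrow> f x = 0)}"
    proof (intro CollectI allI conjI impI)
      fix x assume "x \<in> {..n}" then show "a x \<in> {..t}" using tdeg_ge[of x n a] a by simp
    next
      fix x assume "x \<notin> {..n}" then show "a x = 0" using a terms_zero[of a n x] by simp
    qed
  qed
  show "finite {f. \<forall>x. (x \<in> {..n} \<longrightarrow> f x \<in> {..t}) \<and> (x \<notin> {..n} \<longrightarrow> f x = 0)}"
    by (rule finite_set_of_finite_funs) simp_all
qed

lemma count_lb:
  assumes d1: "1 \<le> d" and dn: "d \<le> n"
  shows "(N + 1) ^ d \<le> card {a \<in> terms n. tdeg n a = d * N \<and> (\<forall>i>d. a i = 0)}"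
proof -
  define F where "F = PiE {1..d} (\<lambda>_. {0..N})"
  have cF: "card F = (N + 1) ^ d" unfolding F_def by (simp add: card_PiE)
  define \<phi> where "\<phi> f = (\<lambda>i. if i = 0 then d * N - sum f {1..d} else if i \<le> d then f i else (0::nat))" for f
  have inj: "inj_on \<phi> F"
  proof (rule inj_onI)
    fix f g assume fg: "f \<in> F" "g \<in> F" "\<phi> f = \<phi> g"
    show "f = g"
    proof (rule PiE_ext[OF fg(1)[unfolded F_def] fg(2)[unfolded F_def]])
      fix i assume i: "i \<in> {1..d}"
      have "\<phi> f i = \<phi> g i" using fg(3) by simp
      then show "f i = g i" using i unfolding \<phi>_def by simp
    qed
  qed
  have img: "\<phi> ` F \<subseteq> {a \<in> terms n. tdeg n a = d * N \<and> (\<forall>i>d. a i = 0)}"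
  proof
    fix a assume "a \<in> \<phi> ` F"
    then obtain f where f: "f \<in> F" "a = \<phi> f" by blast
    have fle: "\<And>i. i \<in> {1..d} \<Longrightarrow> f i \<le> N" using f(1) unfolding F_def by auto
    have s: "sum f {1..d} \<le> d * N" using sum_bounded_above[of "{1..d}" f N, OF fle] by simp
    have "tdeg n a = (\<Sum>i\<le>n. (if i = 0 then d * N - sum f {1..d} else 0) + (if i \<in> {1..d} then f i else 0))"
      unfolding tdeg_def f(2) \<phi>_def by (rule sum.cong) auto
    also have "\<dots> = (d * N - sum f {1..d}) + (\<Sum>i\<le>n. (if i \<in> {1..d} then f i else 0))"
      by (simp add: sum.distrib)
    also have "(\<Sum>i\<le>n. (if i \<in> {1..d} then f i else 0)) = sum f ({..n} \<inter> {1..d})"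
      by (rule sum.inter_restrict[symmetric]) simp
    also have "{..n} \<inter> {1..d} = {1..d}" using dn by auto
    finally have "tdeg n a = d * N" using s by simp
    moreover have "a \<in> terms n" using dn unfolding f(2) \<phi>_def terms_def by simp
    moreover have "\<forall>i>d. a i = 0" unfolding f(2) \<phi>_def by simp
    ultimately show "a \<in> {a \<in> terms n. tdeg n a = d * N \<and> (\<forall>i>d. a i = 0)}" by simp
  qed
  have fin: "finite {a \<in> terms n. tdeg n a = d * N \<and> (\<forall>i>d. a i = 0)}"
    by (rule finite_subset[OF _ fin_deg[of n "d * N"]]) auto
  show ?thesis using card_inj_on_le[OF inj img fin] cF by simp
qed

theorem mainTheorem9:
  fixes n :: nat and p :: "rat poly" and L :: "(nat \<Rightarrow> nat) set"
  assumes "admissible n p"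
    and "int (degree p) \<le> int n - 1"
    and "segment_ideal lex_less n L"
    and "saturated n L"
    and "hilbert_poly n L p"
  shows "gen_segment revlex_less n L \<longleftrightarrow>
           (degree p \<le> 1 \<or> card {a. min_gen L a \<and> tdeg n a > 1} \<le> 2)"
proof -
  note seg = assms(3) and sat = assms(4)
  have n1: "1 \<le> n" using assms(2) by simp
  have dpn: "\<not> n \<le> degree p" using assms(2) by simp
  have mi: "monomial_ideal n L" using seg segment_ideal_def by blast
  obtain t0 where ev: "\<forall>t\<ge>t0. of_nat (hilb n L t) = poly p (of_nat t)"
    using assms(5) unfolding hilbert_poly_def by blast
  have ne: "L \<noteq> {}"
  proof
    assume L0: "L = {}"
    have "\<forall>N. (N + 1) ^ n \<le> hilb n L (n * N)"
    proof
      fix N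
      have "(N + 1) ^ n \<le> card {a \<in> terms n. tdeg n a = n * N \<and> (\<forall>i>n. a i = 0)}"
        using count_lb[OF n1 order_refl] .
      also have "\<dots> \<le> hilb n L (n * N)" unfolding hilb_def L0
        by (rule card_mono[OF finite_subset[OF _ fin_deg[of n "n * N"]]]) auto
      finally show "(N + 1) ^ n \<le> hilb n L (n * N)" .
    qed
    then have "n \<le> degree p" using poly_growth[OF ev n1] by blast
    then show False using dpn by simp
  qed
  obtain c where cT: "c \<in> terms n" and c0: "c 0 = 0" and Lc: "L = LL n c"
    using structure_thm[OF seg sat ne] by blast
  show ?thesis
  proof (cases "BAD n c")
    case False
    have "gen_segment revlex_less n L"
      using notbad_genseg[OF False cT c0] mi sat Lc by simp
    moreover have "card {a. min_gen L a \<and> tdeg n a > 1} \<le> 2"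
      using notbad_card[OF False cT c0] Lc by simp
    ultimately show ?thesis by simp
  next
    case True
    have ngs: "\<not> gen_segment revlex_less n L"
      using bad_not_genseg[OF True cT c0] mi Lc by simp
    have cd: "3 \<le> card {a. min_gen L a \<and> tdeg n a > 1}"
      using bad_card[OF True cT c0] Lc by simp
    obtain j m where jm: "1 \<le> j" "j + 2 \<le> m" "m \<le> n" "0 < c j" "0 < c m"
      using True unfolding BAD_def by blast
    have n2: "2 \<le> n" using jm by simp
    have "\<forall>N. (N + 1) ^ 2 \<le> hilb n L (2 * N)"
    proof
      fix N
      have "(N + 1) ^ 2 \<le> card {a \<in> terms n. tdeg n a = 2 * N \<and> (\<forall>i>2. a i = 0)}"
        using count_lb[OF _ n2] by simp
      also have "\<dots> \<le> hilb n L (2 * N)" unfolding hilb_def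
      proof (rule card_mono[OF finite_subset[OF _ fin_deg[of n "2 * N"]]])
        show "{a \<in> terms n. tdeg n a = 2 * N \<and> a \<notin> L} \<subseteq> {a \<in> terms n. tdeg n a = 2 * N}" by auto
        show "{a \<in> terms n. tdeg n a = 2 * N \<and> (\<forall>i>2. a i = 0)} \<subseteq> {a \<in> terms n. tdeg n a = 2 * N \<and> a \<notin> L}"
        proof
          fix a assume a: "a \<in> {a \<in> terms n. tdeg n a = 2 * N \<and> (\<forall>i>2. a i = 0)}"
          then have aT: "a \<in> terms n" and z: "\<forall>i>2. a i = 0" by auto
          have kT: "key a \<in> terms n" using key_terms[OF aT] .
          have kz: "\<forall>i>2. key a i = 0" using z unfolding key_def by simp
          have "key a m = 0" using kz jm by simp
          then have nek: "key a \<noteq> c" using jm by auto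
          have "\<forall>i>n. key a i = c i" using kT cT unfolding terms_def by simp
          then have tot: "lex_less (key a) c \<or> lex_less c (key a)" using lex_total[OF _ nek] by blast
          have "\<not> lex_less c (key a)"
          proof
            assume "lex_less c (key a)"
            then obtain w where w: "c w < key a w" "\<forall>i>w. c i = key a i" unfolding lex_less_def by blast
            have "w \<le> 2"
            proof (rule ccontr)
              assume "\<not> w \<le> 2" then have "key a w = 0" using kz by simp
              then show False using w(1) by simp
            qed
            then have "c m = key a m" using w(2) jm by simp
            then show False using jm \<open>key a m = 0\<close> by simp
          qed
          then have "lex_less (key a) c" using tot by simp
          then have "a \<notin> L" using Lc LL_iff by simp
          then show "a \<in> {a \<in> terms n. tdeg n a = 2 * N \<and> a \<notin> L}" using a by simp
        qed
      qed
      finally show "(N + 1) ^ 2 \<le> hilb n L (2 * N)" .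
    qed
    then have "2 \<le> degree p" using poly_growth[OF ev, of 2] by simp
    then show ?thesis using ngs cd by simp
  qed
qed

end
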